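(* Let $M$ be a smooth manifold of dimension $n$. Every effective first-order Lagrangian $\omega\in\Omega^n(J^1M)$ (for one scalar field $\phi$) is locally of the form $\omega=L\,dq^1\wedge\dots\wedge dq^n$ for some $L=L(q^\mu,u,p_\mu)\in C^\infty(J^1M)$.
   Context: $J^1M$ is the first jet bundle of functions on $M$ with local coordinates $(q^\mu,u,p_\mu)$, $\mu=1,\dots,n$; for $\phi\in C^\infty(M)$, $j^1\phi=(q^\mu,\phi,\partial_{q^\mu}\phi)$. The Reeb field is $\chi=\partial_u$. The Monge–Ampère operator of $\omega\in\Omega^n(J^1M)$ is $\Delta_\omega\phi=(j^1\phi)^*\omega$. An $n$-form $\omega\in\Omega^n(J^1M)$ is called a Lagrangian; it is a first-order Lagrangian if $\Delta_\omega\phi$ depends on $\phi$ only up to first-order derivatives. A form $\omega$ of degree $k\le n$ is effective if $\chi\lrcorner\omega=0$ and $\bot\omega=0$, where $\bot\alpha=\partial_{p_\mu}\lrcorner\partial_{q^\mu}\lrcorner\alpha$ (summed) for $\deg\alpha>1$ and $\bot\alpha=0$ otherwise. *)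

theory Defs
  imports "HOL-Analysis.Analysis"
begin

text \<open>A coordinate chart of the n-manifold M is an open set
  U of real^'n (n = CARD('n)); over it J^1M is J1 U = U x R x R^n with
  coordinates (q^mu, u, p_mu). Points and tangent vectors of J^1M are of type 'n jet.\<close>

type_synonym 'n jet = "(real^'n) \<times> real \<times> (real^'n)"

definition J1 :: "(real^'n) set \<Rightarrow> ('n::finite) jet set" where
  "J1 U = U \<times> UNIV \<times> UNIV"

fun Ck_on :: "nat \<Rightarrow> 'a::euclidean_space set \<Rightarrow> ('a \<Rightarrow> real) \<Rightarrow> bool" where
  "Ck_on 0 S f = continuous_on S f"
| "Ck_on (Suc k) S f = (f differentiable_on S \<and>
      (\<forall>b\<in>Basis. Ck_on k S (\<lambda>x. frechet_derivative f (at x) b)))"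

definition Cinf_on :: "'a::euclidean_space set \<Rightarrow> ('a \<Rightarrow> real) \<Rightarrow> bool" where
  "Cinf_on S f = (\<forall>k. Ck_on k S f)"

definition dq_vec :: "'n::finite \<Rightarrow> 'n jet" where
  "dq_vec \<mu> = (axis \<mu> 1, 0, 0)"
definition dp_vec :: "'n::finite \<Rightarrow> 'n jet" where
  "dp_vec \<mu> = (0, 0, axis \<mu> 1)"
definition reeb :: "'n::finite jet" where
  "reeb = (0, 1, 0)"

text \<open>A differential k-form on S: at each point an alternating k-linear map,
  given on lists of k tangent vectors; with smooth coefficients.\<close>
definition is_form :: "'a::euclidean_space set \<Rightarrow> nat \<Rightarrow> ('a \<Rightarrow> 'a list \<Rightarrow> real) \<Rightarrow> bool" where
  "is_form S k \<omega> =
    ((\<forall>x\<in>S. \<forall>vs i. length vs = k \<longrightarrow> i < k \<longrightarrow> linear (\<lambda>v. \<omega> x (vs[i := v])))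
   \<and> (\<forall>x\<in>S. \<forall>vs i j. length vs = k \<longrightarrow> i < k \<longrightarrow> j < k \<longrightarrow> i \<noteq> j \<longrightarrow> vs!i = vs!j
          \<longrightarrow> \<omega> x vs = 0)
   \<and> (\<forall>vs. length vs = k \<longrightarrow> Cinf_on S (\<lambda>x. \<omega> x vs)))"

definition interior :: "'a \<Rightarrow> ('b \<Rightarrow> 'a list \<Rightarrow> real) \<Rightarrow> ('b \<Rightarrow> 'a list \<Rightarrow> real)" where
  "interior X \<omega> = (\<lambda>x vs. \<omega> x (X # vs))"

definition bot_op :: "('b \<Rightarrow> ('n::finite) jet list \<Rightarrow> real) \<Rightarrow> ('b \<Rightarrow> 'n jet list \<Rightarrow> real)" where
  "bot_op \<alpha> = (\<lambda>x vs. \<Sum>\<mu>\<in>UNIV. interior (dp_vec \<mu>) (interior (dq_vec \<mu>) \<alpha>) x vs)"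

text \<open>Effective k-form (k \<le> n): chi _| omega = 0 and bot omega = 0 (bot is 0 in degree \<le> 1).\<close>
definition effective :: "('n::finite) jet set \<Rightarrow> nat \<Rightarrow> ('n jet \<Rightarrow> 'n jet list \<Rightarrow> real) \<Rightarrow> bool" where
  "effective S k \<omega> =
    (k \<le> CARD('n)
   \<and> (\<forall>x\<in>S. \<forall>vs. length vs = k - 1 \<longrightarrow> interior reeb \<omega> x vs = 0)
   \<and> (1 < k \<longrightarrow> (\<forall>x\<in>S. \<forall>vs. length vs = k - 2 \<longrightarrow> bot_op \<omega> x vs = 0)))"

definition j1 :: "(real^'n \<Rightarrow> real) \<Rightarrow> real^'n \<Rightarrow> ('n::finite) jet" where
  "j1 \<phi> q = (q, \<phi> q, \<chi> \<mu>. frechet_derivative \<phi> (at q) (axis \<mu> 1))"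

definition MA_op :: "('n::finite jet \<Rightarrow> 'n jet list \<Rightarrow> real) \<Rightarrow> (real^'n \<Rightarrow> real)
                     \<Rightarrow> real^'n \<Rightarrow> (real^'n) list \<Rightarrow> real" where
  "MA_op \<omega> \<phi> q ws = \<omega> (j1 \<phi> q) (map (frechet_derivative (j1 \<phi>) (at q)) ws)"

definition first_order :: "(real^'n) set \<Rightarrow> ('n::finite jet \<Rightarrow> 'n jet list \<Rightarrow> real) \<Rightarrow> bool" where
  "first_order U \<omega> = (\<exists>F. \<forall>\<phi>. Cinf_on U \<phi> \<longrightarrow>
      (\<forall>q\<in>U. \<forall>ws. length ws = CARD('n) \<longrightarrow> MA_op \<omega> \<phi> q ws = F (j1 \<phi> q) ws))"

text \<open>The volume form dq^1 ^ ... ^ dq^n, for a fixed enumeration q^1..q^n of the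
  coordinates indexed by 'n.\<close>
definition qenum :: "nat \<Rightarrow> 'n::finite" where
  "qenum = (SOME e. bij_betw e {..<CARD('n)} UNIV)"

definition dq_vol :: "('n::finite) jet list \<Rightarrow> real" where
  "dq_vol vs = det (\<chi> a b. (fst (vs ! inv_into {..<CARD('n)} qenum b)) $ a)"

end

theory Submission
  imports Defs
begin

definition mlin :: "nat \<Rightarrow> ('v::real_vector list \<Rightarrow> real) \<Rightarrow> bool" where
  "mlin k B \<longleftrightarrow> (\<forall>vs i. length vs = k \<longrightarrow> i < k \<longrightarrow> linear (\<lambda>v. B (vs[i := v])))"

definition altz :: "nat \<Rightarrow> ('v list \<Rightarrow> real) \<Rightarrow> bool" where
  "altz k B \<longleftrightarrow> (\<forall>vs i j. length vs = k \<longrightarrow> i < k \<longrightarrow> j < k \<longrightarrow> i \<noteq> j \<longrightarrow> vs!i = vs!j \<longrightarrow> B vs = 0)"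

lemma mlin_slot:
  assumes "mlin k B" "length xs + Suc (length ys) = k"
  shows "linear (\<lambda>a. B (xs @ a # ys))"
proof -
  have "linear (\<lambda>v. B ((xs @ 0 # ys)[length xs := v]))"
    using assms(1)[unfolded mlin_def, rule_format, of "xs @ 0 # ys" "length xs"] assms(2) by simp
  then show ?thesis by simp
qed

lemma mlin_add:
  assumes "mlin k B" "length xs + Suc (length ys) = k"
  shows "B (xs @ (a + b) # ys) = B (xs @ a # ys) + B (xs @ b # ys)"
  using linear_add[OF mlin_slot[OF assms]] by simp

lemma mlin_scale:
  assumes "mlin k B" "length xs + Suc (length ys) = k"
  shows "B (xs @ (c *\<^sub>R a) # ys) = c * B (xs @ a # ys)"
  using linear_scale[OF mlin_slot[OF assms]] by simp

lemma mlin_diff: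
  assumes "mlin k B" "length xs + Suc (length ys) = k"
  shows "B (xs @ (a - b) # ys) = B (xs @ a # ys) - B (xs @ b # ys)"
  using linear_diff[OF mlin_slot[OF assms]] by simp

lemma mlin_sum:
  assumes "mlin k B" "length xs + Suc (length ys) = k"
  shows "B (xs @ (\<Sum>j\<in>J. c j *\<^sub>R a j) # ys) = (\<Sum>j\<in>J. c j * B (xs @ a j # ys))"
  using linear_sum[OF mlin_slot[OF assms], of "\<lambda>j. c j *\<^sub>R a j" J]
    linear_scale[OF mlin_slot[OF assms]] by simp

lemma mlin_Cons:
  fixes B :: "'v::real_vector list \<Rightarrow> real"
  assumes "mlin (Suc k) B" shows "mlin k (\<lambda>zs. B (u # zs))"
  unfolding mlin_def
proof (intro allI impI)
  fix vs :: "'v list" and i assume "length vs = k" "i < k"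
  then have "linear (\<lambda>v. B ((u # vs)[Suc i := v]))"
    using assms[unfolded mlin_def, rule_format, of "u # vs" "Suc i"] by simp
  then show "linear (\<lambda>v. B (u # vs[i := v]))" by simp
qed

lemma altz_Cons:
  fixes B :: "'v list \<Rightarrow> real"
  assumes "altz (Suc k) B" shows "altz k (\<lambda>zs. B (u # zs))"
  unfolding altz_def
proof (intro allI impI)
  fix vs :: "'v list" and i j assume "length vs = k" "i < k" "j < k" "i \<noteq> j" "vs!i = vs!j"
  then show "B (u # vs) = 0" using assms[unfolded altz_def, rule_format, of "u # vs" "Suc i" "Suc j"]
    by simp
qed

lemma altz_nd:
  assumes "altz k B" "length vs = k" "\<not> distinct vs"
  shows "B vs = 0"
proof -
  from assms(3) obtain i j where "i < length vs" "j < length vs" "i \<noteq> j" "vs!i = vs!j"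
    by (auto simp: distinct_conv_nth)
  then show ?thesis using assms(1)[unfolded altz_def, rule_format, of vs i j] assms(2) by simp
qed

lemma altz_swap:
  assumes "mlin k B" "altz k B" "length xs + Suc (Suc (length ys)) = k"
  shows "B (xs @ u # v # ys) = - B (xs @ v # u # ys)"
proof -
  have z: "B (xs @ w # w # ys) = 0" for w
    by (rule altz_nd[OF assms(2)]) (use assms(3) in auto)
  have l1: "length xs + Suc (length ((u+v) # ys)) = k" using assms(3) by simp
  have l2: "length (xs @ [w]) + Suc (length ys) = k" for w using assms(3) by simp
  have a1: "B (xs @ (u+v) # (u+v) # ys) = B (xs @ u # (u+v) # ys) + B (xs @ v # (u+v) # ys)"
    using mlin_add[OF assms(1) l1] by simp
  have a2: "B (xs @ u # (u+v) # ys) = B (xs @ u # u # ys) + B (xs @ u # v # ys)"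
    using mlin_add[OF assms(1) l2[of u], of u v] by simp
  have a3: "B (xs @ v # (u+v) # ys) = B (xs @ v # u # ys) + B (xs @ v # v # ys)"
    using mlin_add[OF assms(1) l2[of v], of u v] by simp
  show ?thesis using a1 a2 a3 z[of u] z[of v] z[of "u+v"] by linarith
qed

lemma move_front:
  assumes "mlin k B" "altz k B" "length xs + Suc (length ys) = k"
  shows "B (xs @ v # ys) = (-1) ^ length xs * B (v # xs @ ys)"
  using assms
proof (induction xs arbitrary: ys rule: rev_induct)
  case Nil then show ?case by simp
next
  case (snoc x xs)
  have "B ((xs @ [x]) @ v # ys) = B (xs @ x # v # ys)" by simp
  also have "\<dots> = - B (xs @ v # x # ys)"
    using altz_swap[OF snoc.prems(1,2), of xs ys x v] snoc.prems(3) by simp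
  also have "\<dots> = - ((-1) ^ length xs * B (v # xs @ x # ys))"
    using snoc.IH[OF snoc.prems(1,2), of "x # ys"] snoc.prems(3) by simp
  finally show ?case by simp
qed

lemma move_front_upd:
  assumes "mlin k B" "altz k B" "length zs = k" "j < k"
  shows "B (zs[j := v]) = (-1) ^ j * B (v # take j zs @ drop (Suc j) zs)"
proof -
  have "zs[j := v] = take j zs @ v # drop (Suc j) zs"
    using assms(3,4) by (simp add: upd_conv_take_nth_drop)
  moreover have "length (take j zs) + Suc (length (drop (Suc j) zs)) = k"
    using assms(3,4) by simp
  ultimately show ?thesis using move_front[OF assms(1,2), of "take j zs" "drop (Suc j) zs" v] assms
    by (simp only: length_take)
qed

lemma span_vanish:
  assumes "mlin (length vs) B" "\<forall>ws. length ws = length vs \<longrightarrow> set ws \<subseteq> S \<longrightarrow> B ws = 0"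
    "set vs \<subseteq> span S"
  shows "B vs = 0"
  using assms
proof (induction vs arbitrary: B)
  case Nil then show ?case by auto
next
  case (Cons v vs)
  have "B (u # vs) = 0" if "u \<in> S" for u
  proof -
    have "(\<lambda>zs. B (u # zs)) vs = 0"
    proof (rule Cons.IH)
      show "mlin (length vs) (\<lambda>zs. B (u # zs))" using mlin_Cons[of "length vs" B u] Cons.prems(1) by simp
      show "\<forall>ws. length ws = length vs \<longrightarrow> set ws \<subseteq> S \<longrightarrow> B (u # ws) = 0"
        using Cons.prems(2) that by simp
      show "set vs \<subseteq> span S" using Cons.prems(3) by simp
    qed
    then show ?thesis by simp
  qed
  moreover have "linear (\<lambda>a. B ([] @ a # vs))"
    by (rule mlin_slot[OF Cons.prems(1)]) simp
  moreover have "v \<in> span S" using Cons.prems(3) by simp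
  ultimately show ?case
    using real_vector.linear_eq_0_on_span[of "\<lambda>a. B (a # vs)" S v] by simp
qed

lemma F_expand:
  assumes "mlin (length ps) B"
    "\<forall>zs i j. length zs = length ps \<longrightarrow> i < length ps \<longrightarrow> j < length ps \<longrightarrow> i \<noteq> j
        \<longrightarrow> zs!i = F \<longrightarrow> zs!j = F \<longrightarrow> B zs = 0"
  shows "B (map (\<lambda>(w,c). w + c *\<^sub>R F) ps) = B (map fst ps)
           + (\<Sum>j<length ps. snd (ps!j) * B ((map fst ps)[j := F]))"
  using assms
proof (induction ps arbitrary: B)
  case Nil then show ?case by simp
next
  case (Cons p ps)
  obtain w c where p: "p = (w, c)" by force
  let ?r = "map (\<lambda>(w,c). w + c *\<^sub>R F) ps"
  let ?ws = "map fst ps"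
  have L: "length ([]::'a list) + Suc (length ?r) = length (p # ps)" by simp
  have "B (map (\<lambda>(w,c). w + c *\<^sub>R F) (p # ps)) = B ([] @ (w + c *\<^sub>R F) # ?r)" using p by simp
  also have "\<dots> = B (w # ?r) + c * B (F # ?r)"
    using mlin_add[OF Cons.prems(1) L] mlin_scale[OF Cons.prems(1) L] by simp
  finally have e1: "B (map (\<lambda>(w,c). w + c *\<^sub>R F) (p # ps)) = B (w # ?r) + c * B (F # ?r)" .
  have mw: "mlin (length ps) (\<lambda>zs. B (u # zs))" for u
    using mlin_Cons[of "length ps" B u] Cons.prems(1) by simp
  have dw: "\<forall>zs i j. length zs = length ps \<longrightarrow> i < length ps \<longrightarrow> j < length ps \<longrightarrow> i \<noteq> j
        \<longrightarrow> zs!i = F \<longrightarrow> zs!j = F \<longrightarrow> B (u # zs) = 0" for u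
  proof (intro allI impI)
    fix zs i j assume h: "length zs = length ps" "i < length ps" "j < length ps" "i \<noteq> j" "zs!i = F" "zs!j = F"
    show "B (u # zs) = 0"
      using Cons.prems(2)[rule_format, of "u # zs" "Suc i" "Suc j"] h by simp
  qed
  have IHw: "B (w # ?r) = B (w # ?ws) + (\<Sum>j<length ps. snd (ps!j) * B (w # ?ws[j := F]))"
    using Cons.IH[OF mw[of w] dw[of w]] by simp
  have IHF: "B (F # ?r) = B (F # ?ws) + (\<Sum>j<length ps. snd (ps!j) * B (F # ?ws[j := F]))"
    using Cons.IH[OF mw[of F] dw[of F]] by simp
  have z: "B (F # ?ws[j := F]) = 0" if "j < length ps" for j
    using Cons.prems(2)[rule_format, of "F # ?ws[j := F]" 0 "Suc j"] that by simp
  have "(\<Sum>j<length ps. snd (ps!j) * B (F # ?ws[j := F])) = 0"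
    by (rule sum.neutral) (simp add: z)
  then have IHF': "B (F # ?r) = B (F # ?ws)" using IHF by simp
  have "(\<Sum>j<Suc (length ps). snd ((p # ps)!j) * B ((map fst (p # ps))[j := F]))
     = snd ((p # ps)!0) * B ((map fst (p # ps))[0 := F])
       + (\<Sum>j<length ps. snd ((p # ps)!Suc j) * B ((map fst (p # ps))[Suc j := F]))"
    by (rule sum.lessThan_Suc_shift)
  also have "\<dots> = c * B (F # ?ws) + (\<Sum>j<length ps. snd (ps!j) * B (w # ?ws[j := F]))"
    by (simp only: p nth_Cons_0 nth_Cons_Suc list.map list_update_code fst_conv snd_conv)
  finally have "(\<Sum>j<length (p # ps). snd ((p # ps)!j) * B ((map fst (p # ps))[j := F]))
      = c * B (F # ?ws) + (\<Sum>j<length ps. snd (ps!j) * B (w # ?ws[j := F]))"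
    by (simp only: length_Cons)
  then show ?case using e1 IHw IHF' p by simp
qed

lemma perm_sign:
  fixes w T :: "'v::real_vector list"
  shows "mset w = mset T \<Longrightarrow> \<exists>s. \<forall>B. mlin (length T) B \<longrightarrow> altz (length T) B \<longrightarrow> B w = s * B T"
proof (induction T arbitrary: w)
  case Nil then show ?case by auto
next
  case (Cons t T)
  have "t \<in># mset w" using Cons.prems by simp
  then have "t \<in> set w" by simp
  then obtain xs ys where w: "w = xs @ t # ys" by (meson split_list)
  have "mset (xs @ ys) = mset T" using Cons.prems w by simp
  then obtain s where s: "\<forall>B. mlin (length T) B \<longrightarrow> altz (length T) B \<longrightarrow> B (xs @ ys) = s * B T"
    using Cons.IH by blast
  have lw: "length w = length (t # T)" using Cons.prems mset_eq_length by blast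
  show ?case
  proof (intro exI allI impI)
    fix B :: "'v list \<Rightarrow> real" assume m: "mlin (length (t # T)) B" and a: "altz (length (t # T)) B"
    have "B w = (-1) ^ length xs * B (t # xs @ ys)"
      using move_front[OF m a, of xs ys t] lw w by simp
    also have "\<dots> = (-1) ^ length xs * (s * B (t # T))"
      using s[rule_format, OF mlin_Cons altz_Cons, of B t] m a by simp
    finally show "B w = ((-1) ^ length xs * s) * B (t # T)" by simp
  qed
qed

definition gv :: "('i \<Rightarrow> 'v::real_vector) \<Rightarrow> ('i \<Rightarrow> 'v) \<Rightarrow> ('i \<Rightarrow> 'i \<Rightarrow> real) \<Rightarrow> 'i set \<Rightarrow> 'i \<Rightarrow> 'v" where
  "gv e f H N i = e i + (\<Sum>j\<in>N. H i j *\<^sub>R f j)"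

definition Pc :: "('i \<Rightarrow> 'v::real_vector) \<Rightarrow> ('i \<Rightarrow> 'v) \<Rightarrow> nat \<Rightarrow> ('v list \<Rightarrow> real) \<Rightarrow> 'i set \<Rightarrow> bool" where
  "Pc e f k B N \<longleftrightarrow> (\<forall>vs. length vs + 2 = k \<longrightarrow> set vs \<subseteq> span (e ` N \<union> f ` N) \<longrightarrow>
      (\<Sum>\<mu>\<in>N. B (e \<mu> # f \<mu> # vs)) = 0)"

definition Gc :: "('i \<Rightarrow> 'v::real_vector) \<Rightarrow> ('i \<Rightarrow> 'v) \<Rightarrow> nat \<Rightarrow> ('v list \<Rightarrow> real) \<Rightarrow> 'i set \<Rightarrow> bool" where
  "Gc e f k B N \<longleftrightarrow> (\<forall>H is. (\<forall>i j. H i j = H j i) \<longrightarrow> length is = k \<longrightarrow> set is \<subseteq> N \<longrightarrow>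
      B (map (gv e f H N) is) = 0)"

lemma mlin_app:
  fixes B :: "'v::real_vector list \<Rightarrow> real"
  shows "mlin (length us + k) B \<Longrightarrow> mlin k (\<lambda>zs. B (us @ zs))"
proof (induction us arbitrary: B)
  case Nil then show ?case by simp
next
  case (Cons u us)
  have "mlin (length us + k) (\<lambda>zs. B (u # zs))" using mlin_Cons[of "length us + k" B u] Cons.prems by simp
  from Cons.IH[OF this] show ?case by simp
qed

lemma altz_app:
  fixes B :: "'v list \<Rightarrow> real"
  shows "altz (length us + k) B \<Longrightarrow> altz k (\<lambda>zs. B (us @ zs))"
proof (induction us arbitrary: B)
  case Nil then show ?case by simp
next
  case (Cons u us)
  have "altz (length us + k) (\<lambda>zs. B (u # zs))" using altz_Cons[of "length us + k" B u] Cons.prems by simp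
  from Cons.IH[OF this] show ?case by simp
qed

lemma move2:
  assumes "mlin k B" "altz k B" "length us + Suc (Suc (length vs)) = k"
  shows "B (us @ x # y # vs) = B (x # y # us @ vs)"
proof -
  have "B (us @ x # (y # vs)) = (-1) ^ length us * B (x # us @ y # vs)"
    using move_front[OF assms(1,2), of us "y # vs" x] assms(3) by simp
  also have "B (x # us @ y # vs) = B ((x # us) @ y # vs)" by simp
  also have "\<dots> = (-1) ^ Suc (length us) * B (y # x # us @ vs)"
    using move_front[OF assms(1,2), of "x # us" vs y] assms(3) by simp
  also have "B (y # x # us @ vs) = - B (x # y # us @ vs)"
    using altz_swap[OF assms(1,2), of "[]" "us @ vs" y x] assms(3) by simp
  finally show ?thesis by simp
qed

lemma gS:
  assumes "i \<in> N"
  shows "gv e f H N i \<in> span (e ` N \<union> f ` N)"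
  unfolding gv_def
  by (intro span_add span_sum span_scale) (auto intro: span_base simp: assms)

lemma gv_insert:
  assumes "finite N" "a \<notin> N"
  shows "gv e f H (insert a N) i = e i + H i a *\<^sub>R f a + (\<Sum>j\<in>N. H i j *\<^sub>R f j)"
  unfolding gv_def using assms by (simp add: sum.insert add.assoc)

lemma Pc_prefix:
  fixes B :: "'v::real_vector list \<Rightarrow> real"
  assumes fin: "finite N" and aN: "a \<notin> N"
    and m: "mlin k B" and al: "altz k B" and P: "Pc e f k B (insert a N)"
    and k: "k = length us + k1" and us: "us \<noteq> []" "set us \<subseteq> {e a, f a}"
  shows "Pc e f k1 (\<lambda>zs. B (us @ zs)) N"
  unfolding Pc_def
proof (intro allI impI)
  fix vs :: "'v list"
  assume l: "length vs + 2 = k1" and s: "set vs \<subseteq> span (e ` N \<union> f ` N)"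
  have sw: "B (us @ e \<mu> # f \<mu> # vs) = B (e \<mu> # f \<mu> # us @ vs)" for \<mu>
    by (rule move2[OF m al]) (use l k in simp)
  have sub: "span (e ` N \<union> f ` N) \<subseteq> span (e ` insert a N \<union> f ` insert a N)"
    by (rule span_mono) auto
  have "set (us @ vs) \<subseteq> span (e ` insert a N \<union> f ` insert a N)"
    using us s sub by (auto intro: span_base)
  then have "(\<Sum>\<mu>\<in>insert a N. B (e \<mu> # f \<mu> # us @ vs)) = 0"
    using P l k unfolding Pc_def by simp
  moreover have "B (e a # f a # us @ vs) = 0"
  proof (rule altz_nd[OF al])
    show "length (e a # f a # us @ vs) = k" using l k by simp
    obtain u where "u \<in> set us" using us by (cases us) auto
    then show "\<not> distinct (e a # f a # us @ vs)" using us by auto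
  qed
  ultimately have "(\<Sum>\<mu>\<in>N. B (e \<mu> # f \<mu> # us @ vs)) = 0"
    using fin aN by (simp add: sum.insert)
  then show "(\<Sum>\<mu>\<in>N. B (us @ e \<mu> # f \<mu> # vs)) = 0" by (simp add: sw)
qed

lemma G_prefix:
  fixes B :: "'v::real_vector list \<Rightarrow> real" and e f :: "'i \<Rightarrow> 'v" and N :: "'i set"
  assumes fin: "finite N" and aN: "a \<notin> N"
    and m: "mlin k B" and G: "Gc e f k B (insert a N)" and k: "k = Suc k1"
  shows "Gc e f k1 (\<lambda>zs. B (e a # zs)) N \<and> Gc e f k1 (\<lambda>zs. B (f a # zs)) N"
proof -
  have key: "B (e a # map (gv e f H N) is) + c * B (f a # map (gv e f H N) is) = 0"
    if sym: "\<forall>i j. H i j = H j i" and l: "length is = k1" and s: "set is \<subseteq> N" for H "is" c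
  proof -
    define Hc where "Hc i j = (if i = a \<and> j = a then c else if i = a \<or> j = a then 0 else H i j)" for i j
    have symc: "\<forall>i j. Hc i j = Hc j i" using sym unfolding Hc_def by auto
    have "B (map (gv e f Hc (insert a N)) (a # is)) = 0"
      using G[unfolded Gc_def, rule_format, of Hc "a # is"] symc l s k by auto
    moreover have "gv e f Hc (insert a N) a = e a + c *\<^sub>R f a"
    proof -
      have "(\<Sum>j\<in>N. Hc a j *\<^sub>R f j) = 0" using aN by (intro sum.neutral) (auto simp: Hc_def)
      moreover have "Hc a a = c" by (simp add: Hc_def)
      moreover have "gv e f Hc (insert a N) a = e a + Hc a a *\<^sub>R f a + (\<Sum>j\<in>N. Hc a j *\<^sub>R f j)"
        by (rule gv_insert[OF fin aN])
      ultimately show ?thesis by simp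
    qed
    moreover have "map (gv e f Hc (insert a N)) is = map (gv e f H N) is"
    proof (rule map_cong[OF refl])
      fix i assume "i \<in> set is"
      then have i: "i \<in> N" "i \<noteq> a" using s aN by auto
      have "(\<Sum>j\<in>N. Hc i j *\<^sub>R f j) = (\<Sum>j\<in>N. H i j *\<^sub>R f j)"
        using aN i by (intro sum.cong) (auto simp: Hc_def)
      moreover have "Hc i a = 0" using i by (simp add: Hc_def)
      moreover have "gv e f Hc (insert a N) i = e i + Hc i a *\<^sub>R f a + (\<Sum>j\<in>N. Hc i j *\<^sub>R f j)"
        by (rule gv_insert[OF fin aN])
      ultimately show "gv e f Hc (insert a N) i = gv e f H N i" by (simp add: gv_def)
    qed
    ultimately have "B ([] @ (e a + c *\<^sub>R f a) # map (gv e f H N) is) = 0" by simp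
    moreover have L: "length ([]::'v list) + Suc (length (map (gv e f H N) is)) = k" using l k by simp
    ultimately show ?thesis
      using mlin_add[OF m L] mlin_scale[OF m L] by simp
  qed
  show ?thesis unfolding Gc_def
  proof (intro conjI allI impI)
    fix H :: "'i \<Rightarrow> 'i \<Rightarrow> real" and "is" :: "'i list"
    assume "\<forall>i j. H i j = H j i" "length is = k1" "set is \<subseteq> N"
    then show "B (e a # map (gv e f H N) is) = 0" using key[of H "is" 0] by simp
  next
    fix H :: "'i \<Rightarrow> 'i \<Rightarrow> real" and "is" :: "'i list"
    assume h: "\<forall>i j. H i j = H j i" "length is = k1" "set is \<subseteq> N"
    then show "B (f a # map (gv e f H N) is) = 0" using key[OF h, of 0] key[OF h, of 1] by simp
  qed
qed

lemma G_restrict: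
  fixes B :: "'v::real_vector list \<Rightarrow> real" and e f :: "'i \<Rightarrow> 'v" and N :: "'i set"
  assumes fin: "finite N" and aN: "a \<notin> N" and G: "Gc e f k B (insert a N)"
  shows "Gc e f k B N"
  unfolding Gc_def
proof (intro allI impI)
  fix H :: "'i \<Rightarrow> 'i \<Rightarrow> real" and "is" :: "'i list"
  assume sym: "\<forall>i j. H i j = H j i" and l: "length is = k" and s: "set is \<subseteq> N"
  define H0 where "H0 i j = (if i = a \<or> j = a then 0 else H i j)" for i j
  have sym0: "\<forall>i j. H0 i j = H0 j i" using sym unfolding H0_def by auto
  have "B (map (gv e f H0 (insert a N)) is) = 0"
    using G[unfolded Gc_def, rule_format, of H0 "is"] sym0 l s by auto
  moreover have "map (gv e f H0 (insert a N)) is = map (gv e f H N) is"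
  proof (rule map_cong[OF refl])
    fix i assume "i \<in> set is"
    then have i: "i \<in> N" "i \<noteq> a" using s aN by auto
    have "(\<Sum>j\<in>N. H0 i j *\<^sub>R f j) = (\<Sum>j\<in>N. H i j *\<^sub>R f j)"
      using aN i by (intro sum.cong) (auto simp: H0_def)
    moreover have "H0 i a = 0" using i by (simp add: H0_def)
    moreover have "gv e f H0 (insert a N) i = e i + H0 i a *\<^sub>R f a + (\<Sum>j\<in>N. H0 i j *\<^sub>R f j)"
      by (rule gv_insert[OF fin aN])
    ultimately show "gv e f H0 (insert a N) i = gv e f H N i" by (simp add: gv_def)
  qed
  ultimately show "B (map (gv e f H N) is) = 0" by simp
qed

lemma trace:
  fixes B :: "'v::real_vector list \<Rightarrow> real" and e f :: "'i \<Rightarrow> 'v" and N :: "'i set"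
    and H :: "'i \<Rightarrow> 'i \<Rightarrow> real"
  assumes fin: "finite N" and aN: "a \<notin> N"
    and m: "mlin k B" and al: "altz k B" and P: "Pc e f k B (insert a N)"
    and G: "Gc e f k B (insert a N)" and k: "k = Suc (Suc k2)"
    and V10: "\<forall>zs. length zs = Suc k2 \<longrightarrow> set zs \<subseteq> span (e ` N \<union> f ` N) \<longrightarrow> B (e a # zs) = 0"
    and V01: "\<forall>zs. length zs = Suc k2 \<longrightarrow> set zs \<subseteq> span (e ` N \<union> f ` N) \<longrightarrow> B (f a # zs) = 0"
    and sym: "\<forall>i j. H i j = H j i" and l: "length is = k2" and s: "set is \<subseteq> N"
  shows "B (e a # f a # map (gv e f H N) is) = 0"
proof -
  define E where "E = e a"
  define F where "F = f a"
  define g where "g = gv e f H N"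
  define gs where "gs = map g is"
  define X where "X = B (E # F # gs)"
  define SN where "SN = span (e ` N \<union> f ` N)"
  have lgs: "length gs = k2" using l by (simp add: gs_def)
  have gSN: "g i \<in> SN" if "i \<in> N" for i using gS[OF that] by (simp add: g_def SN_def)
  have gsS: "set gs \<subseteq> SN" using s gSN by (auto simp: gs_def)
  have eS: "e i \<in> SN" "f i \<in> SN" if "i \<in> N" for i
    using that by (auto simp: SN_def intro: span_base)
  show ?thesis
  proof (cases "card N < k2")
    case True
    have "\<not> distinct is"
    proof
      assume "distinct is"
      then have "card (set is) = k2" using l distinct_card by blast
      moreover have "card (set is) \<le> card N" using s fin by (simp add: card_mono)
      ultimately show False using True by simp
    qed
    then have "\<not> distinct (e a # f a # map (gv e f H N) is)" by (auto simp: distinct_map)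
    then show ?thesis using altz_nd[OF al] k l by simp
  next
    case False
    then have kN: "k2 \<le> card N" by simp
    have "(\<Sum>\<mu>\<in>insert a N. B (e \<mu> # f \<mu> # gs)) = 0"
    proof -
      have "SN \<subseteq> span (e ` insert a N \<union> f ` insert a N)" unfolding SN_def by (rule span_mono) auto
      then show ?thesis using P gsS lgs k unfolding Pc_def by auto
    qed
    then have i1: "(\<Sum>\<mu>\<in>N. B (e \<mu> # f \<mu> # gs)) + X = 0"
      using fin aN by (simp add: sum.insert X_def E_def F_def)
    have Lk: "length ([]::'v list) + Suc (length (f \<mu> # gs)) = k" for \<mu> using lgs k by simp
    have i2: "B (e \<mu> # f \<mu> # gs) = B (g \<mu> # f \<mu> # gs) - (\<Sum>j\<in>N. H \<mu> j * B (f j # f \<mu> # gs))" for \<mu>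
    proof -
      have "e \<mu> = g \<mu> - (\<Sum>j\<in>N. H \<mu> j *\<^sub>R f j)" by (simp add: g_def gv_def)
      then have "B ([] @ e \<mu> # f \<mu> # gs) = B ([] @ g \<mu> # f \<mu> # gs) - B ([] @ (\<Sum>j\<in>N. H \<mu> j *\<^sub>R f j) # f \<mu> # gs)"
        using mlin_diff[OF m Lk] by simp
      then show ?thesis using mlin_sum[OF m Lk[of \<mu>], where c = "H \<mu>" and a = f and J = N] by simp
    qed
    have sw: "B (x # y # gs) = - B (y # x # gs)" for x y
      using altz_swap[OF m al, of "[]" gs x y] lgs k by simp
    have i3: "(\<Sum>\<mu>\<in>N. \<Sum>j\<in>N. H \<mu> j * B (f j # f \<mu> # gs)) = 0"
    proof -
      let ?S = "(\<Sum>\<mu>\<in>N. \<Sum>j\<in>N. H \<mu> j * B (f j # f \<mu> # gs))"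
      have "?S = (\<Sum>j\<in>N. \<Sum>\<mu>\<in>N. H \<mu> j * B (f j # f \<mu> # gs))" by (rule sum.swap)
      also have "\<dots> = (\<Sum>j\<in>N. \<Sum>\<mu>\<in>N. - (H j \<mu> * B (f \<mu> # f j # gs)))"
      proof (intro sum.cong refl)
        fix j \<mu>
        have "B (f j # f \<mu> # gs) = - B (f \<mu> # f j # gs)" by (rule sw)
        then show "H \<mu> j * B (f j # f \<mu> # gs) = - (H j \<mu> * B (f \<mu> # f j # gs))"
          using sym by simp
      qed
      also have "\<dots> = - ?S" by (simp add: sum_negf)
      finally show ?thesis by simp
    qed
    have i4: "(\<Sum>\<mu>\<in>N. B (g \<mu> # f \<mu> # gs)) = - X"
    proof -
      have "(\<Sum>\<mu>\<in>N. B (e \<mu> # f \<mu> # gs)) = (\<Sum>\<mu>\<in>N. B (g \<mu> # f \<mu> # gs)) - (\<Sum>\<mu>\<in>N. \<Sum>j\<in>N. H \<mu> j * B (f j # f \<mu> # gs))"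
        by (simp add: i2 sum_subtractf)
      then show ?thesis using i1 i3 by simp
    qed
    define D where "D l = take l gs @ drop (Suc l) gs" for l
    have i5: "0 = B (f \<mu> # g \<mu> # gs) + X
        + (\<Sum>l<k2. (if is!l = \<mu> then 1 else 0) * ((-1) ^ Suc l * B (E # F # g \<mu> # D l)))"
      if \<mu>N: "\<mu> \<in> N" for \<mu>
    proof -
      define Hm where "Hm i j = (if i = a \<and> j = a then 0 else if i = a then (if j = \<mu> then 1 else 0)
          else if j = a then (if i = \<mu> then 1 else 0) else H i j)" for i j
      have symm: "\<forall>i j. Hm i j = Hm j i" using sym unfolding Hm_def by auto
      have "B (map (gv e f Hm (insert a N)) (a # \<mu> # is)) = 0"
        using G[unfolded Gc_def, rule_format, of Hm "a # \<mu> # is"] symm l s k \<mu>N by auto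
      moreover have ga: "gv e f Hm (insert a N) a = E + f \<mu>"
      proof -
        have "(\<Sum>j\<in>N. Hm a j *\<^sub>R f j) = (\<Sum>j\<in>N. if j = \<mu> then f j else 0)"
          using aN by (intro sum.cong refl) (auto simp: Hm_def)
        also have "\<dots> = f \<mu>" using fin \<mu>N by (simp add: sum.delta')
        finally have "(\<Sum>j\<in>N. Hm a j *\<^sub>R f j) = f \<mu>" .
        moreover have "Hm a a = 0" by (simp add: Hm_def)
        moreover have "gv e f Hm (insert a N) a = e a + Hm a a *\<^sub>R f a + (\<Sum>j\<in>N. Hm a j *\<^sub>R f j)"
          by (rule gv_insert[OF fin aN])
        ultimately show ?thesis by (simp add: E_def)
      qed
      moreover have gi: "gv e f Hm (insert a N) i = g i + (if i = \<mu> then 1 else 0) *\<^sub>R F" if "i \<in> N" for i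
      proof -
        have ia: "i \<noteq> a" using that aN by auto
        have "(\<Sum>j\<in>N. Hm i j *\<^sub>R f j) = (\<Sum>j\<in>N. H i j *\<^sub>R f j)"
          using aN ia by (intro sum.cong refl) (auto simp: Hm_def)
        moreover have "Hm i a = (if i = \<mu> then 1 else 0)" using ia by (simp add: Hm_def)
        moreover have "gv e f Hm (insert a N) i = e i + Hm i a *\<^sub>R f a + (\<Sum>j\<in>N. Hm i j *\<^sub>R f j)"
          by (rule gv_insert[OF fin aN])
        ultimately show ?thesis by (simp add: g_def gv_def F_def algebra_simps)
      qed
      define ps where "ps = (E + f \<mu>, 0::real) # (g \<mu>, 1) # map (\<lambda>i. (g i, if i = \<mu> then 1 else 0::real)) is"
      have lps: "length ps = k" using l k by (simp add: ps_def)
      have "map (gv e f Hm (insert a N)) (a # \<mu> # is) = map (\<lambda>(w,c). w + c *\<^sub>R F) ps"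
        using ga gi \<mu>N s by (auto simp: ps_def)
      ultimately have z0: "B (map (\<lambda>(w,c). w + c *\<^sub>R F) ps) = 0" by simp
      have mps: "mlin (length ps) B" using m lps by simp
      have dps: "\<forall>zs i j. length zs = length ps \<longrightarrow> i < length ps \<longrightarrow> j < length ps \<longrightarrow> i \<noteq> j
          \<longrightarrow> zs!i = F \<longrightarrow> zs!j = F \<longrightarrow> B zs = 0"
        using al lps unfolding altz_def by metis
      have mf: "map fst ps = (E + f \<mu>) # g \<mu> # gs" by (simp add: ps_def gs_def comp_def)
      define h where "h j = snd (ps!j) * B ((map fst ps)[j := F])" for j
      have "(\<Sum>j<length ps. h j) = (\<Sum>j<Suc (Suc k2). h j)" using lps k by simp
      also have "\<dots> = h 0 + (h 1 + (\<Sum>l<k2. h (Suc (Suc l))))"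
        by (simp only: sum.lessThan_Suc_shift One_nat_def)
      finally have hs: "(\<Sum>j<length ps. h j) = h 0 + (h 1 + (\<Sum>l<k2. h (Suc (Suc l))))" .
      have h0: "h 0 = 0" by (simp add: h_def ps_def)
      have h1: "h 1 = B ((E + f \<mu>) # F # gs)" by (simp add: h_def mf) (simp add: ps_def)
      have hl: "h (Suc (Suc l)) = (if is!l = \<mu> then 1 else 0) * B ((E + f \<mu>) # g \<mu> # gs[l := F])"
        if "l < k2" for l
        using that l by (simp add: h_def mf) (simp add: ps_def)
      have L0: "length ([]::'v list) + Suc (length (y # zs)) = k" if "length zs = k2" for y zs
        using that k by simp
      have sub1: "set (D l) \<subseteq> SN" for l
        unfolding D_def using gsS set_take_subset set_drop_subset by (metis Un_subset_iff order_trans set_append)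
      have lD: "length (D l) = k2 - 1" if "l < k2" for l using that lgs by (simp add: D_def)
      have A1: "B ((E + f \<mu>) # g \<mu> # gs) = B (f \<mu> # g \<mu> # gs)"
      proof -
        have "B ([] @ (E + f \<mu>) # g \<mu> # gs) = B ([] @ E # g \<mu> # gs) + B ([] @ f \<mu> # g \<mu> # gs)"
          using mlin_add[OF m L0[OF lgs]] by simp
        moreover have "B (E # g \<mu> # gs) = 0"
          using V10 lgs gsS gSN[OF \<mu>N] by (simp add: E_def SN_def)
        ultimately show ?thesis by simp
      qed
      have A2: "B ((E + f \<mu>) # F # gs) = X"
      proof -
        have "B ([] @ (E + f \<mu>) # F # gs) = B ([] @ E # F # gs) + B ([] @ f \<mu> # F # gs)"
          using mlin_add[OF m L0[OF lgs]] by simp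
        moreover have "B (f \<mu> # F # gs) = - B (F # f \<mu> # gs)" by (rule sw)
        moreover have "B (F # f \<mu> # gs) = 0"
          using V01 lgs gsS eS(2)[OF \<mu>N] by (simp add: F_def SN_def)
        ultimately show ?thesis by (simp add: X_def)
      qed
      have A3: "B ((E + f \<mu>) # g \<mu> # gs[l := F]) = (-1) ^ Suc l * B (E # F # g \<mu> # D l)"
        if lk: "l < k2" for l
      proof -
        have lu: "length (gs[l := F]) = k2" using lgs by simp
        have "B ([] @ (E + f \<mu>) # g \<mu> # gs[l := F]) = B ([] @ E # g \<mu> # gs[l := F]) + B ([] @ f \<mu> # g \<mu> # gs[l := F])"
          using mlin_add[OF m L0[OF lu]] by simp
        moreover have "B (f \<mu> # g \<mu> # gs[l := F]) = 0"
        proof -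
          have "B (f \<mu> # g \<mu> # gs[l := F]) = B ((f \<mu> # g \<mu> # gs)[Suc (Suc l) := F])" by simp
          also have "\<dots> = (-1) ^ Suc (Suc l) * B (F # take (Suc (Suc l)) (f \<mu> # g \<mu> # gs) @ drop (Suc (Suc (Suc l))) (f \<mu> # g \<mu> # gs))"
            by (rule move_front_upd[OF m al]) (use lgs k lk in auto)
          also have "take (Suc (Suc l)) (f \<mu> # g \<mu> # gs) @ drop (Suc (Suc (Suc l))) (f \<mu> # g \<mu> # gs) = f \<mu> # g \<mu> # D l"
            by (simp add: D_def)
          also have "B (F # f \<mu> # g \<mu> # D l) = 0"
            using V01[rule_format, of "f \<mu> # g \<mu> # D l"] lD[OF lk] lk sub1[of l] gSN[OF \<mu>N] eS(2)[OF \<mu>N]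
            by (simp add: F_def SN_def)
          finally show ?thesis by simp
        qed
        moreover have "B (E # g \<mu> # gs[l := F]) = (-1) ^ Suc l * B (E # F # g \<mu> # D l)"
        proof -
          have mE: "mlin (Suc k2) (\<lambda>zs. B (E # zs))" using mlin_Cons[of "Suc k2" B E] m k by simp
          have aE: "altz (Suc k2) (\<lambda>zs. B (E # zs))" using altz_Cons[of "Suc k2" B E] al k by simp
          have "B (E # g \<mu> # gs[l := F]) = (\<lambda>zs. B (E # zs)) ((g \<mu> # gs)[Suc l := F])" by simp
          also have "\<dots> = (-1) ^ Suc l * (\<lambda>zs. B (E # zs)) (F # take (Suc l) (g \<mu> # gs) @ drop (Suc (Suc l)) (g \<mu> # gs))"
            by (rule move_front_upd[OF mE aE]) (use lgs lk in auto)
          also have "take (Suc l) (g \<mu> # gs) @ drop (Suc (Suc l)) (g \<mu> # gs) = g \<mu> # D l"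
            by (simp add: D_def)
          finally show ?thesis by simp
        qed
        ultimately show ?thesis by simp
      qed
      have "0 = B (map fst ps) + (\<Sum>j<length ps. h j)"
        using F_expand[OF mps dps] z0 by (simp add: h_def)
      also have "B (map fst ps) = B (f \<mu> # g \<mu> # gs)" using A1 mf by simp
      also have "(\<Sum>j<length ps. h j) = X + (\<Sum>l<k2. (if is!l = \<mu> then 1 else 0) * ((-1) ^ Suc l * B (E # F # g \<mu> # D l)))"
      proof -
        have "(\<Sum>l<k2. h (Suc (Suc l))) = (\<Sum>l<k2. (if is!l = \<mu> then 1 else 0) * ((-1) ^ Suc l * B (E # F # g \<mu> # D l)))"
          by (intro sum.cong refl) (simp add: hl A3)
        then show ?thesis using hs h0 h1 A2 by simp
      qed
      finally show ?thesis by simp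
    qed
    have i6: "(if is!l = \<mu> then 1 else 0) * ((-1) ^ Suc l * B (E # F # g \<mu> # D l))
        = - ((if is!l = \<mu> then 1 else 0) * X)" if "l < k2" for l \<mu>
    proof (cases "is!l = \<mu>")
      case True
      then have gl: "g \<mu> = gs!l" using that l by (simp add: gs_def)
      have "gs = take l gs @ (gs!l) # drop (Suc l) gs" using that lgs by (simp add: id_take_nth_drop)
      then have "X = B ((E # F # take l gs) @ (gs!l) # drop (Suc l) gs)" by (simp add: X_def)
      also have "\<dots> = (-1) ^ Suc (Suc l) * B (gs!l # E # F # D l)"
        using move_front[OF m al, of "E # F # take l gs" "drop (Suc l) gs" "gs!l"] that lgs k
        by (simp add: D_def)
      also have "B (gs!l # E # F # D l) = B (E # F # gs!l # D l)"
        using move2[OF m al, of "[gs!l]" "D l" E F] that lgs k by (simp add: D_def)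
      finally have "X = (-1) ^ l * B (E # F # g \<mu> # D l)" using gl by simp
      then show ?thesis using True by simp
    qed simp
    have i7: "(\<Sum>\<mu>\<in>N. \<Sum>l<k2. (if is!l = \<mu> then 1 else 0) * X) = real k2 * X"
    proof -
      have "(\<Sum>\<mu>\<in>N. \<Sum>l<k2. (if is!l = \<mu> then 1 else 0) * X) = (\<Sum>l<k2. \<Sum>\<mu>\<in>N. (if is!l = \<mu> then 1 else 0) * X)"
        by (rule sum.swap)
      also have "\<dots> = (\<Sum>l<k2. X)"
      proof (rule sum.cong[OF refl])
        fix l assume "l \<in> {..<k2}"
        then have "is!l \<in> N" using s l by auto
        have "(\<Sum>\<mu>\<in>N. (if is!l = \<mu> then 1 else 0) * X) = (\<Sum>\<mu>\<in>N. if is!l = \<mu> then X else 0)"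
          by (intro sum.cong) auto
        then show "(\<Sum>\<mu>\<in>N. (if is!l = \<mu> then 1 else 0) * X) = X"
          using fin \<open>is!l \<in> N\<close> by (simp add: sum.delta)
      qed
      finally show ?thesis by simp
    qed
    have i8: "(\<Sum>\<mu>\<in>N. B (f \<mu> # g \<mu> # gs)) = X"
    proof -
      have "(\<Sum>\<mu>\<in>N. B (f \<mu> # g \<mu> # gs)) = (\<Sum>\<mu>\<in>N. - B (g \<mu> # f \<mu> # gs))"
        by (intro sum.cong refl) (rule sw)
      then show ?thesis using i4 by (simp add: sum_negf)
    qed
    have "0 = (\<Sum>\<mu>\<in>N. B (f \<mu> # g \<mu> # gs) + X
        + (\<Sum>l<k2. (if is!l = \<mu> then 1 else 0) * ((-1) ^ Suc l * B (E # F # g \<mu> # D l))))"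
      using i5 by (simp add: sum.neutral)
    also have "\<dots> = (\<Sum>\<mu>\<in>N. B (f \<mu> # g \<mu> # gs) + X - (\<Sum>l<k2. (if is!l = \<mu> then 1 else 0) * X))"
    proof (intro sum.cong refl)
      fix \<mu> assume "\<mu> \<in> N"
      have "(\<Sum>l<k2. (if is!l = \<mu> then 1 else 0) * ((-1) ^ Suc l * B (E # F # g \<mu> # D l)))
          = (\<Sum>l<k2. - ((if is!l = \<mu> then 1 else 0) * X))"
        by (intro sum.cong refl) (simp only: lessThan_iff i6)
      then show "B (f \<mu> # g \<mu> # gs) + X + (\<Sum>l<k2. (if is!l = \<mu> then 1 else 0) * ((-1) ^ Suc l * B (E # F # g \<mu> # D l)))
          = B (f \<mu> # g \<mu> # gs) + X - (\<Sum>l<k2. (if is!l = \<mu> then 1 else 0) * X)"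
        by (simp add: sum_negf)
    qed
    also have "\<dots> = X + real (card N) * X - real k2 * X"
      using i7 i8 by (simp add: sum.distrib sum_subtractf)
    finally have "(real (card N) + 1 - real k2) * X = 0" by (simp add: algebra_simps)
    moreover have "real (card N) + 1 - real k2 \<noteq> 0" using kN by simp
    ultimately have "X = 0" by simp
    then show ?thesis by (simp add: X_def E_def F_def gs_def g_def)
  qed
qed

lemma core:
  fixes e f :: "'i \<Rightarrow> 'v::real_vector" and N :: "'i set"
  assumes "finite N"
  shows "\<forall>k B ws. mlin k B \<longrightarrow> altz k B \<longrightarrow> Pc e f k B N \<longrightarrow> Gc e f k B N \<longrightarrow>
           length ws = k \<longrightarrow> set ws \<subseteq> e ` N \<union> f ` N \<longrightarrow> B ws = 0"
  using assms
proof (induction N rule: finite_induct)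
  case empty
  show ?case
  proof (intro allI impI)
    fix k and B :: "'v list \<Rightarrow> real" and ws :: "'v list"
    assume G: "Gc e f k B {}" and l: "length ws = k" and s: "set ws \<subseteq> e ` {} \<union> f ` {}"
    then have ws: "ws = []" by simp
    have "B (map (gv e f (\<lambda>_ _. 0) {}) []) = 0"
      using G[unfolded Gc_def, rule_format, of "\<lambda>_ _. 0" "[]"] l ws by simp
    then show "B ws = 0" using ws by simp
  qed
next
  case (insert a N)
  note fin = insert.hyps(1) and aN = insert.hyps(2) and IH = insert.IH
  define SN where "SN = span (e ` N \<union> f ` N)"
  have van: "\<forall>zs. length zs = k' \<longrightarrow> set zs \<subseteq> SN \<longrightarrow> B' zs = 0"
    if "mlin k' B'" "altz k' B'" "Pc e f k' B' N" "Gc e f k' B' N" for k' and B' :: "'v list \<Rightarrow> real"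
  proof (intro allI impI)
    fix zs :: "'v list" assume "length zs = k'" "set zs \<subseteq> SN"
    then show "B' zs = 0"
      using span_vanish[of zs B' "e ` N \<union> f ` N"] IH that unfolding SN_def by auto
  qed
  show ?case
  proof (intro allI impI)
    fix k and B :: "'v list \<Rightarrow> real" and ws :: "'v list"
    assume m: "mlin k B" and al: "altz k B" and P: "Pc e f k B (insert a N)"
      and G: "Gc e f k B (insert a N)" and lw: "length ws = k"
      and sw: "set ws \<subseteq> e ` insert a N \<union> f ` insert a N"
    show "B ws = 0"
    proof (cases k)
      case 0
      then have ws: "ws = []" using lw by simp
      have "B (map (gv e f (\<lambda>_ _. 0) (insert a N)) []) = 0"
        using G[unfolded Gc_def, rule_format, of "\<lambda>_ _. 0" "[]"] 0 by simp
      then show ?thesis using ws by simp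
    next
      case (Suc k1)
      have m10: "mlin k1 (\<lambda>zs. B (u # zs))" for u using mlin_Cons[of k1 B u] m Suc by simp
      have a10: "altz k1 (\<lambda>zs. B (u # zs))" for u using altz_Cons[of k1 B u] al Suc by simp
      have GG: "Gc e f k1 (\<lambda>zs. B (e a # zs)) N \<and> Gc e f k1 (\<lambda>zs. B (f a # zs)) N"
        by (rule G_prefix[OF fin aN m G Suc])
      have P10: "Pc e f k1 (\<lambda>zs. B (e a # zs)) N"
        using Pc_prefix[OF fin aN m al P, of "[e a]" k1] Suc by simp
      have P01: "Pc e f k1 (\<lambda>zs. B (f a # zs)) N"
        using Pc_prefix[OF fin aN m al P, of "[f a]" k1] Suc by simp
      have V10: "\<forall>zs. length zs = k1 \<longrightarrow> set zs \<subseteq> SN \<longrightarrow> B (e a # zs) = 0"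
        using van[OF m10 a10 P10] GG by simp
      have V01: "\<forall>zs. length zs = k1 \<longrightarrow> set zs \<subseteq> SN \<longrightarrow> B (f a # zs) = 0"
        using van[OF m10 a10 P01] GG by simp
      have V11: "\<forall>vs. length vs + 2 = k \<longrightarrow> set vs \<subseteq> SN \<longrightarrow> B (e a # f a # vs) = 0"
      proof (intro allI impI)
        fix vs :: "'v list" assume lv: "length vs + 2 = k" and sv: "set vs \<subseteq> SN"
        define k2 where "k2 = length vs"
        have k2: "k = Suc (Suc k2)" using lv k2_def by simp
        have m11: "mlin k2 (\<lambda>zs. B ([e a, f a] @ zs))" using mlin_app[of "[e a, f a]" k2 B] m k2 by simp
        have a11: "altz k2 (\<lambda>zs. B ([e a, f a] @ zs))" using altz_app[of "[e a, f a]" k2 B] al k2 by simp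
        have P11: "Pc e f k2 (\<lambda>zs. B ([e a, f a] @ zs)) N"
          by (rule Pc_prefix[OF fin aN m al P]) (use k2 in auto)
        have G11: "Gc e f k2 (\<lambda>zs. B ([e a, f a] @ zs)) N"
          unfolding Gc_def
        proof (intro allI impI)
          fix H :: "'i \<Rightarrow> 'i \<Rightarrow> real" and "is" :: "'i list"
          assume "\<forall>i j. H i j = H j i" "length is = k2" "set is \<subseteq> N"
          then show "B ([e a, f a] @ map (gv e f H N) is) = 0"
            using trace[OF fin aN m al P G k2] V10 V01 Suc k2 unfolding SN_def by simp
        qed
        show "B (e a # f a # vs) = 0"
          using van[OF m11 a11 P11 G11] sv k2_def by simp
      qed
      have P00: "Pc e f k B N"
        unfolding Pc_def
      proof (intro allI impI)
        fix vs :: "'v list" assume lv: "length vs + 2 = k" and sv: "set vs \<subseteq> span (e ` N \<union> f ` N)"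
        have "SN \<subseteq> span (e ` insert a N \<union> f ` insert a N)" unfolding SN_def by (rule span_mono) auto
        then have "(\<Sum>\<mu>\<in>insert a N. B (e \<mu> # f \<mu> # vs)) = 0"
          using P lv sv unfolding Pc_def SN_def by auto
        moreover have "B (e a # f a # vs) = 0" using V11 lv sv unfolding SN_def by simp
        ultimately show "(\<Sum>\<mu>\<in>N. B (e \<mu> # f \<mu> # vs)) = 0" using fin aN by simp
      qed
      have V00: "\<forall>zs. length zs = k \<longrightarrow> set zs \<subseteq> SN \<longrightarrow> B zs = 0"
        using van[OF m al P00 G_restrict[OF fin aN G]] .
      have inW: "x \<in> SN" if "x \<in> set ws" "x \<noteq> e a" "x \<noteq> f a" for x
        using that sw unfolding SN_def by (auto intro: span_base)
      show ?thesis
      proof (cases "e a \<in> set ws")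
        case True
        then obtain xs ys where ws: "ws = xs @ e a # ys" by (meson split_list)
        have "B ws = (-1) ^ length xs * B (e a # xs @ ys)"
          using move_front[OF m al, of xs ys "e a"] ws lw by simp
        moreover have "B (e a # xs @ ys) = 0"
        proof (cases "f a \<in> set (xs @ ys)")
          case True
          then obtain xs' ys' where r: "xs @ ys = xs' @ f a # ys'" by (meson split_list)
          have lr: "length (xs' @ f a # ys') = k1" using r ws lw Suc by (metis add_Suc_right length_Cons length_append nat.inject)
          have "B (e a # xs' @ f a # ys') = (-1) ^ length xs' * B (e a # f a # xs' @ ys')"
            using move_front[OF m10[of "e a"] a10[of "e a"], of xs' ys' "f a"] lr by simp
          moreover have "B (e a # f a # xs' @ ys') = 0"
          proof (cases "distinct (e a # f a # xs' @ ys')")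
            case False
            then show ?thesis using altz_nd[OF al] lr Suc by simp
          next
            case True
            have "set (xs' @ ys') \<subseteq> SN"
            proof
              fix x assume x: "x \<in> set (xs' @ ys')"
              then have "x \<in> set (xs @ ys)" using r by simp
              then have "x \<in> set ws" using ws by auto
              moreover have "x \<noteq> e a" "x \<noteq> f a" using True x by auto
              ultimately show "x \<in> SN" using inW by blast
            qed
            then show ?thesis using V11 lr Suc by simp
          qed
          ultimately show ?thesis using r by simp
        next
          case False
          show ?thesis
          proof (cases "e a \<in> set (xs @ ys)")
            case True
            then have "\<not> distinct (e a # xs @ ys)" by simp
            then show ?thesis using altz_nd[OF al] ws lw by simp
          next
            case False': False
            have "set (xs @ ys) \<subseteq> SN"
            proof
              fix x assume x: "x \<in> set (xs @ ys)"
              then have "x \<in> set ws" using ws by auto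
              moreover have "x \<noteq> e a" "x \<noteq> f a" using False False' x by auto
              ultimately show "x \<in> SN" using inW by blast
            qed
            then show ?thesis using V10 ws lw Suc by simp
          qed
        qed
        ultimately show ?thesis by simp
      next
        case notE: False
        show ?thesis
        proof (cases "f a \<in> set ws")
          case True
          then obtain xs ys where ws: "ws = xs @ f a # ys" by (meson split_list)
          have "B ws = (-1) ^ length xs * B (f a # xs @ ys)"
            using move_front[OF m al, of xs ys "f a"] ws lw by simp
          moreover have "B (f a # xs @ ys) = 0"
          proof (cases "f a \<in> set (xs @ ys)")
            case True
            then have "\<not> distinct (f a # xs @ ys)" by simp
            then show ?thesis using altz_nd[OF al] ws lw by simp
          next
            case False
            have "set (xs @ ys) \<subseteq> SN"
            proof
              fix x assume x: "x \<in> set (xs @ ys)"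
              then have "x \<in> set ws" using ws by auto
              moreover have "x \<noteq> e a" using notE \<open>x \<in> set ws\<close> by auto
              moreover have "x \<noteq> f a" using False x by auto
              ultimately show "x \<in> SN" using inW by blast
            qed
            then show ?thesis using V01 ws lw Suc by simp
          qed
          ultimately show ?thesis by simp
        next
          case False
          have "set ws \<subseteq> SN" using inW notE False by blast
          then show ?thesis using V00 lw by simp
        qed
      qed
    qed
  qed
qed

lemma hd_nth [derivative_intros]: "((\<lambda>x::real^'n. x $ i) has_derivative (\<lambda>h. h $ i)) F"
  by (rule bounded_linear_imp_has_derivative) (rule bounded_linear_vec_nth)

definition Qf :: "real \<Rightarrow> ('n::finite \<Rightarrow> real) \<Rightarrow> ('n \<Rightarrow> 'n \<Rightarrow> real) \<Rightarrow> real^'n \<Rightarrow> real^'n \<Rightarrow> real" where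
  "Qf c l m z x = c + (\<Sum>i\<in>UNIV. l i * (x$i - z$i)) + (\<Sum>i\<in>UNIV. \<Sum>j\<in>UNIV. m i j * ((x$i - z$i) * (x$j - z$j)))"

definition Qd :: "('n::finite \<Rightarrow> real) \<Rightarrow> ('n \<Rightarrow> 'n \<Rightarrow> real) \<Rightarrow> real^'n \<Rightarrow> real^'n \<Rightarrow> real^'n \<Rightarrow> real" where
  "Qd l m z x h = (\<Sum>i\<in>UNIV. l i * h$i) + (\<Sum>i\<in>UNIV. \<Sum>j\<in>UNIV. m i j * (h$i * (x$j - z$j) + (x$i - z$i) * h$j))"

lemma Qf_deriv: "(Qf c l m z has_derivative Qd l m z x) (at x)"
proof -
  have "((\<lambda>x. c + (\<Sum>i\<in>UNIV. l i * (x$i - z$i)) + (\<Sum>i\<in>UNIV. \<Sum>j\<in>UNIV. m i j * ((x$i - z$i) * (x$j - z$j))))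
     has_derivative (\<lambda>h. 0 + (\<Sum>i\<in>UNIV. l i * (h$i - 0)) + (\<Sum>i\<in>UNIV. \<Sum>j\<in>UNIV. m i j * ((x$i - z$i) * (h$j - 0) + (h$i - 0) * (x$j - z$j))))) (at x)"
    by (intro derivative_intros)
  then show ?thesis unfolding Qf_def[abs_def] Qd_def[abs_def] by (simp add: algebra_simps)
qed

lemma Qf_frechet: "frechet_derivative (Qf c l m z) (at x) = Qd l m z x"
  using Qf_deriv frechet_derivative_at by metis

lemma Qd_eq_Qf: "Qd l m z x b = Qf (\<Sum>i\<in>UNIV. l i * b$i)
     (\<lambda>j. \<Sum>i\<in>UNIV. (m i j + m j i) * b$i) (\<lambda>_ _. 0) z x"
proof -
  have "(\<Sum>i\<in>UNIV. \<Sum>j\<in>UNIV. m i j * (b$i * (x$j - z$j) + (x$i - z$i) * b$j))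
      = (\<Sum>i\<in>UNIV. \<Sum>j\<in>UNIV. m i j * b$i * (x$j - z$j) + m i j * (x$i - z$i) * b$j)"
    by (intro sum.cong refl) (simp add: algebra_simps)
  also have "\<dots> = (\<Sum>i\<in>UNIV. \<Sum>j\<in>UNIV. m i j * b$i * (x$j - z$j)) + (\<Sum>i\<in>UNIV. \<Sum>j\<in>UNIV. m i j * (x$i - z$i) * b$j)"
    by (simp add: sum.distrib)
  also have "(\<Sum>i\<in>UNIV. \<Sum>j\<in>UNIV. m i j * b$i * (x$j - z$j)) = (\<Sum>j\<in>UNIV. \<Sum>i\<in>UNIV. m i j * b$i * (x$j - z$j))"
    by (rule sum.swap)
  finally have e1: "(\<Sum>i\<in>UNIV. \<Sum>j\<in>UNIV. m i j * (b$i * (x$j - z$j) + (x$i - z$i) * b$j))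
     = (\<Sum>j\<in>UNIV. \<Sum>i\<in>UNIV. m i j * b$i * (x$j - z$j)) + (\<Sum>j\<in>UNIV. \<Sum>i\<in>UNIV. m j i * (x$j - z$j) * b$i)" .
  have "(\<Sum>j\<in>UNIV. (\<Sum>i\<in>UNIV. (m i j + m j i) * b$i) * (x$j - z$j))
      = (\<Sum>j\<in>UNIV. \<Sum>i\<in>UNIV. (m i j + m j i) * b$i * (x$j - z$j))"
    by (simp add: sum_distrib_right)
  also have "\<dots> = (\<Sum>j\<in>UNIV. \<Sum>i\<in>UNIV. m i j * b$i * (x$j - z$j) + m j i * (x$j - z$j) * b$i)"
    by (intro sum.cong refl) (simp add: algebra_simps)
  also have "\<dots> = (\<Sum>j\<in>UNIV. \<Sum>i\<in>UNIV. m i j * b$i * (x$j - z$j)) + (\<Sum>j\<in>UNIV. \<Sum>i\<in>UNIV. m j i * (x$j - z$j) * b$i)"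
    by (simp add: sum.distrib)
  finally have "(\<Sum>i\<in>UNIV. \<Sum>j\<in>UNIV. m i j * (b$i * (x$j - z$j) + (x$i - z$i) * b$j))
     = (\<Sum>j\<in>UNIV. (\<Sum>i\<in>UNIV. (m i j + m j i) * b$i) * (x$j - z$j))" using e1 by simp
  then show ?thesis unfolding Qd_def Qf_def by simp
qed

lemma Qf_Ck: "Ck_on k U (Qf c l m z)"
proof (induction k arbitrary: c l m)
  case 0
  have "continuous_on U (Qf c l m z)"
    by (intro continuous_at_imp_continuous_on ballI has_derivative_continuous[OF Qf_deriv])
  then show ?case by simp
next
  case (Suc k)
  have "Qf c l m z differentiable_on U"
    by (intro differentiable_at_imp_differentiable_on ballI differentiableI[OF Qf_deriv])
  moreover have "Ck_on k U (\<lambda>x. frechet_derivative (Qf c l m z) (at x) b)" for b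
    unfolding Qf_frechet Qd_eq_Qf by (rule Suc.IH)
  ultimately show ?case by simp
qed

lemma Qf_Cinf: "Cinf_on U (Qf c l m z)"
  unfolding Cinf_on_def by (intro allI) (rule Qf_Ck)

lemma Qd_axis:
  fixes H :: "'n::finite \<Rightarrow> 'n \<Rightarrow> real" and p0 q0 q :: "real^'n" and \<mu> :: 'n
  assumes sym: "\<forall>i j. H i j = H j i"
  shows "Qd (\<lambda>i. p0$i) (\<lambda>i j. H i j / 2) q0 q (axis \<mu> 1) = p0$\<mu> + (\<Sum>j\<in>UNIV. H \<mu> j * (q$j - q0$j))"
proof -
  have a: "axis \<mu> 1 $ i = (if i = \<mu> then 1 else 0)" for i :: 'n by (simp add: axis_def)
  have s1: "(\<Sum>i\<in>UNIV. p0$i * axis \<mu> 1 $ i) = p0$\<mu>"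
  proof -
    have "(\<Sum>i\<in>UNIV. p0$i * axis \<mu> 1 $ i) = (\<Sum>i\<in>UNIV. if i = \<mu> then p0$i else 0)"
      by (intro sum.cong refl) (simp add: a)
    then show ?thesis by simp
  qed
  have "(\<Sum>i\<in>UNIV. \<Sum>j\<in>UNIV. H i j / 2 * (axis \<mu> 1 $ i * (q$j - q0$j) + (q$i - q0$i) * axis \<mu> 1 $ j))
      = (\<Sum>i\<in>UNIV. \<Sum>j\<in>UNIV. H i j / 2 * (axis \<mu> 1 $ i * (q$j - q0$j))) + (\<Sum>i\<in>UNIV. \<Sum>j\<in>UNIV. H i j / 2 * ((q$i - q0$i) * axis \<mu> 1 $ j))"
    by (simp add: distrib_left sum.distrib)
  also have "(\<Sum>i\<in>UNIV. \<Sum>j\<in>UNIV. H i j / 2 * (axis \<mu> 1 $ i * (q$j - q0$j))) = (\<Sum>j\<in>UNIV. H \<mu> j / 2 * (q$j - q0$j))"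
  proof -
    have "(\<Sum>i\<in>UNIV. \<Sum>j\<in>UNIV. H i j / 2 * (axis \<mu> 1 $ i * (q$j - q0$j)))
        = (\<Sum>i\<in>UNIV. if i = \<mu> then (\<Sum>j\<in>UNIV. H i j / 2 * (q$j - q0$j)) else 0)"
      by (intro sum.cong refl) (simp add: a)
    then show ?thesis by simp
  qed
  also have "(\<Sum>i\<in>UNIV. \<Sum>j\<in>UNIV. H i j / 2 * ((q$i - q0$i) * axis \<mu> 1 $ j)) = (\<Sum>i\<in>UNIV. H i \<mu> / 2 * (q$i - q0$i))"
  proof -
    have "(\<Sum>i\<in>UNIV. \<Sum>j\<in>UNIV. H i j / 2 * ((q$i - q0$i) * axis \<mu> 1 $ j))
        = (\<Sum>i\<in>UNIV. \<Sum>j\<in>UNIV. if j = \<mu> then H i j / 2 * (q$i - q0$i) else 0)"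
      by (intro sum.cong refl) (simp add: a)
    then show ?thesis by simp
  qed
  also have "(\<Sum>i\<in>UNIV. H i \<mu> / 2 * (q$i - q0$i)) = (\<Sum>j\<in>UNIV. H \<mu> j / 2 * (q$j - q0$j))"
    by (intro sum.cong refl) (metis sym)
  finally have "(\<Sum>i\<in>UNIV. \<Sum>j\<in>UNIV. H i j / 2 * (axis \<mu> 1 $ i * (q$j - q0$j) + (q$i - q0$i) * axis \<mu> 1 $ j))
      = (\<Sum>j\<in>UNIV. H \<mu> j * (q$j - q0$j))"
    by (simp add: sum.distrib[symmetric])
  then show ?thesis unfolding Qd_def using s1 by simp
qed

lemma j1_quad:
  fixes H :: "'n::finite \<Rightarrow> 'n \<Rightarrow> real" and q0 p0 :: "real^'n" and u0 :: real
  assumes sym: "\<forall>i j. H i j = H j i"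
  defines "\<phi> \<equiv> Qf u0 (\<lambda>i. p0$i) (\<lambda>i j. H i j / 2) q0"
  shows "j1 \<phi> q0 = (q0, u0, p0)"
    and "frechet_derivative (j1 \<phi>) (at q0) w = (w, \<Sum>i\<in>UNIV. p0$i * w$i, (\<chi> i j. H i j) *v w)"
proof -
  define S :: "real^'n^'n" where "S = (\<chi> i j. H i j)"
  have fd: "frechet_derivative \<phi> (at q) (axis \<mu> 1) = p0$\<mu> + (\<Sum>j\<in>UNIV. H \<mu> j * (q$j - q0$j))" for q \<mu>
    unfolding \<phi>_def Qf_frechet by (rule Qd_axis[OF sym])
  have j1e: "j1 \<phi> = (\<lambda>q. (q, \<phi> q, p0 + S *v (q - q0)))"
  proof
    fix q
    have "(\<chi> \<mu>. frechet_derivative \<phi> (at q) (axis \<mu> 1)) = p0 + S *v (q - q0)"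
      by (simp add: vec_eq_iff fd S_def matrix_vector_mult_def)
    then show "j1 \<phi> q = (q, \<phi> q, p0 + S *v (q - q0))" by (simp add: j1_def)
  qed
  show "j1 \<phi> q0 = (q0, u0, p0)" unfolding j1e by (simp add: \<phi>_def Qf_def)
  have dS: "((\<lambda>q. p0 + S *v (q - q0)) has_derivative (\<lambda>h. S *v h)) (at q0)"
  proof -
    have d1: "((\<lambda>q. q - q0) has_derivative (\<lambda>h. h)) (at q0)"
      using has_derivative_diff[OF has_derivative_ident has_derivative_const[of q0]] by simp
    have d2: "((\<lambda>q. S *v (q - q0)) has_derivative (\<lambda>h. S *v h)) (at q0)"
      by (rule bounded_linear.has_derivative[OF matrix_vector_mul_bounded_linear d1])
    show ?thesis using has_derivative_add[OF has_derivative_const[of p0] d2] by simp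
  qed
  have dphi: "(\<phi> has_derivative Qd (\<lambda>i. p0$i) (\<lambda>i j. H i j / 2) q0 q0) (at q0)"
    unfolding \<phi>_def by (rule Qf_deriv)
  have "((\<lambda>q. (q, \<phi> q, p0 + S *v (q - q0))) has_derivative
      (\<lambda>h. (h, Qd (\<lambda>i. p0$i) (\<lambda>i j. H i j / 2) q0 q0 h, S *v h))) (at q0)"
    by (intro has_derivative_Pair has_derivative_ident dphi dS)
  then have "frechet_derivative (j1 \<phi>) (at q0) = (\<lambda>h. (h, Qd (\<lambda>i. p0$i) (\<lambda>i j. H i j / 2) q0 q0 h, S *v h))"
    unfolding j1e by (rule frechet_derivative_at[symmetric])
  then show "frechet_derivative (j1 \<phi>) (at q0) w = (w, \<Sum>i\<in>UNIV. p0$i * w$i, (\<chi> i j. H i j) *v w)"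
    by (simp add: Qd_def S_def)
qed

lemma qenum_bij: "bij_betw (qenum :: nat \<Rightarrow> 'n::finite) {..<CARD('n)} UNIV"
proof -
  obtain h :: "nat \<Rightarrow> 'n" where "bij_betw h {0..<card (UNIV :: 'n set)} UNIV"
    using ex_bij_betw_nat_finite[of "UNIV :: 'n set"] by auto
  then have "\<exists>e :: nat \<Rightarrow> 'n. bij_betw e {..<CARD('n)} UNIV" by (auto simp: atLeast0LessThan)
  then show ?thesis unfolding qenum_def by (rule someI_ex)
qed

definition iq :: "'n::finite \<Rightarrow> nat" where "iq = inv_into {..<CARD('n)} qenum"

lemma iq_lt: "iq (b :: 'n::finite) < CARD('n)"
proof -
  have "bij_betw (iq :: 'n \<Rightarrow> nat) UNIV {..<CARD('n)}"
    unfolding iq_def by (rule bij_betw_inv_into[OF qenum_bij])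
  then show ?thesis by (auto dest: bij_betwE)
qed

lemma qenum_iq: "qenum (iq (b :: 'n::finite)) = b"
  unfolding iq_def by (rule bij_betw_inv_into_right[OF qenum_bij]) simp

lemma iq_qenum: "i < CARD('n::finite) \<Longrightarrow> iq (qenum i :: 'n) = i"
  unfolding iq_def by (rule bij_betw_inv_into_left[OF qenum_bij]) simp

lemma iq_eq_iff: "i < CARD('n::finite) \<Longrightarrow> (iq (b :: 'n) = i) = (b = qenum i)"
  using iq_qenum qenum_iq by metis

definition rowsM :: "'n::finite jet list \<Rightarrow> real^'n^'n" where
  "rowsM vs = (\<chi> b. fst (vs ! iq b))"

lemma rowsM_nth: "rowsM vs $ b = fst (vs ! iq b)"
  by (simp add: rowsM_def)

lemma dq_vol_rows: "dq_vol (vs :: 'n::finite jet list) = det (rowsM vs)"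
proof -
  have "(\<chi> a b. fst (vs ! inv_into {..<CARD('n)} qenum b) $ a) = transpose (rowsM vs)"
    by (simp add: transpose_def vec_eq_iff iq_def rowsM_def)
  then show ?thesis unfolding dq_vol_def by simp
qed

lemma dq_vol_upd:
  assumes "length (vs :: 'n::finite jet list) = CARD('n)" "i < CARD('n)"
  shows "dq_vol (vs[i := v]) = det (\<chi> b. if b = qenum i then fst v else fst (vs ! iq b))"
proof -
  have "rowsM (vs[i := v]) $ b = (if b = qenum i then fst v else fst (vs ! iq b))" for b :: 'n
  proof -
    have lt: "iq b < length vs" using iq_lt[of b] assms by simp
    show ?thesis
    proof (cases "b = qenum i")
      case True
      then have "iq b = i" using iq_qenum[OF assms(2)] by simp
      then show ?thesis unfolding rowsM_nth using True lt by simp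
    next
      case False
      then have "iq b \<noteq> i" using qenum_iq[of b] by auto
      then show ?thesis unfolding rowsM_nth using False by simp
    qed
  qed
  then have "rowsM (vs[i := v]) = (\<chi> b. if b = qenum i then fst v else fst (vs ! iq b))"
    by (simp add: vec_eq_iff)
  then show ?thesis by (simp add: dq_vol_rows)
qed

lemma dq_mlin: "mlin CARD('n::finite) (dq_vol :: 'n jet list \<Rightarrow> real)"
  unfolding mlin_def
proof (intro allI impI)
  fix vs :: "'n jet list" and i assume l: "length vs = CARD('n)" and i: "i < CARD('n)"
  define c :: "'n \<Rightarrow> real^'n" where "c b = fst (vs ! iq b)" for b
  have e: "dq_vol (vs[i := v]) = det (\<chi> b. if b = qenum i then fst v else c b)" for v
    unfolding c_def by (rule dq_vol_upd[OF l i])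
  show "linear (\<lambda>v. dq_vol (vs[i := v]))"
  proof (rule linearI)
    fix x y :: "'n jet"
    show "dq_vol (vs[i := x + y]) = dq_vol (vs[i := x]) + dq_vol (vs[i := y])"
      unfolding e fst_add by (rule det_row_add[of "qenum i" "\<lambda>_. fst x" "\<lambda>_. fst y" c])
  next
    fix r :: real and x :: "'n jet"
    show "dq_vol (vs[i := r *\<^sub>R x]) = r *\<^sub>R dq_vol (vs[i := x])"
      unfolding e fst_scaleR scalar_mult_eq_scaleR[symmetric] using det_row_mul[of "qenum i" r "\<lambda>_. fst x" c] by simp
  qed
qed

lemma dq_altz: "altz CARD('n::finite) (dq_vol :: 'n jet list \<Rightarrow> real)"
  unfolding altz_def
proof (intro allI impI)
  fix vs :: "'n jet list" and i j
  assume l: "length vs = CARD('n)" and ij: "i < CARD('n)" "j < CARD('n)" "i \<noteq> j" "vs!i = vs!j"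
  have ne: "qenum i \<noteq> (qenum j :: 'n)" using ij iq_qenum by metis
  have "row (qenum i) (rowsM vs) = row (qenum j) (rowsM vs)"
    using ij by (simp add: row_def rowsM_nth iq_qenum)
  then show "dq_vol vs = 0" unfolding dq_vol_rows using det_identical_rows[OF ne] by blast
qed

lemma dq_zero:
  assumes "length (vs :: 'n::finite jet list) = CARD('n)" "i < CARD('n)" "fst (vs ! i) = 0"
  shows "dq_vol vs = 0"
proof -
  have "row (qenum i) (rowsM vs) = (0 :: real^'n)"
    using assms by (simp add: row_def rowsM_nth iq_qenum vec_eq_iff)
  then show ?thesis unfolding dq_vol_rows using det_zero_row(1) by blast
qed

lemma dq_basis: "dq_vol (map (\<lambda>i. dq_vec (qenum i :: 'n::finite)) [0..<CARD('n)]) = 1"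
proof -
  have r: "rowsM (map (\<lambda>i. dq_vec (qenum i :: 'n)) [0..<CARD('n)]) $ b = axis b 1" for b :: 'n
    using iq_lt[of b] by (simp add: rowsM_nth dq_vec_def qenum_iq)
  have "rowsM (map (\<lambda>i. dq_vec (qenum i :: 'n)) [0..<CARD('n)]) = mat 1"
    unfolding vec_eq_iff using r by (simp add: mat_def axis_def vec_eq_iff)
  then show ?thesis unfolding dq_vol_rows by simp
qed

lemma dq_fst:
  assumes "length (vs :: 'n::finite jet list) = CARD('n)" "map fst vs = map fst ws"
  shows "dq_vol vs = dq_vol ws"
proof -
  have l: "length ws = CARD('n)" using assms by (metis length_map)
  have "fst (vs ! iq b) = fst (ws ! iq b)" for b :: 'n
    using assms(2) iq_lt[of b] assms(1) l by (metis nth_map)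
  then show ?thesis unfolding dq_vol_rows by (simp add: rowsM_def)
qed

lemma sum_dp: "(\<Sum>j\<in>A. c j *\<^sub>R ((0::real^'n), (0::real), (v j :: real^'n))) = (0, 0, \<Sum>j\<in>A. c j *\<^sub>R v j)"
  by (induct A rule: infinite_finite_induct) (auto simp: zero_prod_def)

lemma sum_dq: "(\<Sum>j\<in>A. c j *\<^sub>R ((v j :: real^'n), (0::real), (0::real^'n))) = (\<Sum>j\<in>A. c j *\<^sub>R v j, 0, 0)"
  by (induct A rule: infinite_finite_induct) (auto simp: zero_prod_def)

lemma axis_sum: "(\<Sum>j\<in>UNIV. c j *\<^sub>R axis j (1::real)) = (\<chi> j. c j :: real^'n::finite)"
  using basis_expansion[of "\<chi> j. c j :: real^'n"] by (simp add: scalar_mult_eq_scaleR)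

lemma axis_dot: "(\<Sum>j\<in>UNIV. p$j * axis i (1::real) $ j) = (p :: real^'n::finite) $ i"
proof -
  have "(\<Sum>j\<in>UNIV. p$j * axis i (1::real) $ j) = (\<Sum>j\<in>UNIV. if j = i then p$j else 0)"
    by (intro sum.cong refl) (simp add: axis_def)
  then show ?thesis by simp
qed

lemma mv_axis: "((\<chi> a b. H a b) *v axis i (1::real)) = (\<chi> j. H j i :: real^'n::finite)"
proof -
  have "(\<Sum>k\<in>UNIV. H j k * axis i (1::real) $ k) = H j i" for j :: 'n
  proof -
    have "(\<Sum>k\<in>UNIV. H j k * axis i (1::real) $ k) = (\<Sum>k\<in>UNIV. if k = i then H j k else 0)"
      by (intro sum.cong refl) (simp add: axis_def)
    then show ?thesis by simp
  qed
  then show ?thesis by (simp add: vec_eq_iff matrix_vector_mult_def)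
qed

lemma gv_explicit:
  "gv dq_vec dp_vec H UNIV i = (axis i 1, 0, \<chi> j. H i j :: real^'n::finite)"
proof -
  have "(\<Sum>j\<in>UNIV. H i j *\<^sub>R dp_vec j) = ((0::real^'n), (0::real), \<Sum>j\<in>UNIV. H i j *\<^sub>R axis j (1::real))"
    unfolding dp_vec_def by (rule sum_dp)
  then show ?thesis by (simp add: gv_def dq_vec_def axis_sum)
qed

lemma span_all: "v \<in> span (insert reeb (range dq_vec \<union> range dp_vec) :: 'n::finite jet set)"
proof -
  obtain a u b where v: "v = (a, u, b)" by (cases v) auto
  let ?S = "insert reeb (range dq_vec \<union> range dp_vec) :: 'n jet set"
  have "(\<Sum>j\<in>UNIV. a$j *\<^sub>R dq_vec j) + u *\<^sub>R reeb + (\<Sum>j\<in>UNIV. b$j *\<^sub>R dp_vec j) \<in> span ?S"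
    by (intro span_add span_sum span_scale) (auto intro: span_base)
  moreover have "(\<Sum>j\<in>UNIV. a$j *\<^sub>R dq_vec j) = ((\<Sum>j\<in>UNIV. a$j *\<^sub>R axis j (1::real)), (0::real), (0::real^'n))"
    unfolding dq_vec_def by (rule sum_dq)
  moreover have "(\<Sum>j\<in>UNIV. b$j *\<^sub>R dp_vec j) = ((0::real^'n), (0::real), (\<Sum>j\<in>UNIV. b$j *\<^sub>R axis j (1::real)))"
    unfolding dp_vec_def by (rule sum_dp)
  ultimately show ?thesis using v basis_expansion[of a] basis_expansion[of b]
    by (simp add: reeb_def scalar_mult_eq_scaleR)
qed

lemma mlin_comb:
  assumes "mlin k A" "mlin k D"
  shows "mlin k (\<lambda>vs. A vs - c * D vs)"
  unfolding mlin_def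
proof (intro allI impI)
  fix vs :: "'a list" and i assume h: "length vs = k" "i < k"
  have la: "linear (\<lambda>v. A (vs[i := v]))" and ld: "linear (\<lambda>v. D (vs[i := v]))"
    using assms h unfolding mlin_def by auto
  show "linear (\<lambda>v. A (vs[i := v]) - c * D (vs[i := v]))"
  proof (rule linearI)
    fix x y show "A (vs[i := x + y]) - c * D (vs[i := x + y]) = (A (vs[i := x]) - c * D (vs[i := x])) + (A (vs[i := y]) - c * D (vs[i := y]))"
      using linear_add[OF la, of x y] linear_add[OF ld, of x y] by (simp add: algebra_simps)
  next
    fix r x show "A (vs[i := r *\<^sub>R x]) - c * D (vs[i := r *\<^sub>R x]) = r *\<^sub>R (A (vs[i := x]) - c * D (vs[i := x]))"
      using linear_scale[OF la, of r x] linear_scale[OF ld, of r x] by (simp add: algebra_simps)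
  qed
qed

lemma pointwise:
  fixes \<omega> :: "'n::finite jet \<Rightarrow> 'n jet list \<Rightarrow> real"
  assumes Fm: "is_form (J1 U) CARD('n) \<omega>" and Eff: "effective (J1 U) CARD('n) \<omega>"
    and FO: "first_order U \<omega>" and x: "x \<in> J1 U" and lv: "length vs = CARD('n)"
  shows "\<omega> x vs = \<omega> x (map (\<lambda>i. dq_vec (qenum i)) [0..<CARD('n)]) * dq_vol vs"
proof -
  define A where "A = \<omega> x"
  define E :: "'n jet list" where "E = map (\<lambda>i. dq_vec (qenum i)) [0..<CARD('n)]"
  have mA: "mlin CARD('n) A" using Fm x unfolding is_form_def mlin_def A_def by blast
  have aA: "altz CARD('n) A" using Fm x unfolding is_form_def altz_def A_def by blast
  have reeb0: "A zs = 0" if lz: "length zs = CARD('n)" and rz: "reeb \<in> set zs" for zs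
  proof -
    obtain xs ys where zs: "zs = xs @ reeb # ys" using rz by (meson split_list)
    have "A zs = (-1) ^ length xs * A (reeb # xs @ ys)"
      using move_front[OF mA aA, of xs ys reeb] zs lz by simp
    moreover have "A (reeb # xs @ ys) = 0"
    proof -
      have "length (xs @ ys) = CARD('n) - 1" using zs lz by simp
      then have "interior reeb \<omega> x (xs @ ys) = 0" using Eff x unfolding effective_def by blast
      then show ?thesis by (simp add: interior_def A_def)
    qed
    ultimately show ?thesis by simp
  qed
  have strip: "A (map (\<lambda>i. g i + c i *\<^sub>R reeb) is) = A (map g is)"
    if li: "length is = CARD('n)" for g :: "'n \<Rightarrow> 'n jet" and c :: "'n \<Rightarrow> real" and "is"
  proof -
    define ps where "ps = map (\<lambda>i. (g i, c i)) is"
    have lps: "length ps = CARD('n)" using li by (simp add: ps_def)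
    have mps: "mlin (length ps) A" using mA lps by simp
    have dps: "\<forall>zs i j. length zs = length ps \<longrightarrow> i < length ps \<longrightarrow> j < length ps \<longrightarrow> i \<noteq> j
          \<longrightarrow> zs!i = reeb \<longrightarrow> zs!j = reeb \<longrightarrow> A zs = 0"
      using aA lps unfolding altz_def by metis
    have "(\<Sum>j<length ps. snd (ps!j) * A ((map fst ps)[j := reeb])) = 0"
    proof (rule sum.neutral, rule ballI)
      fix j assume "j \<in> {..<length ps}"
      then have j: "j < length ps" by simp
      have "A ((map fst ps)[j := reeb]) = 0"
        by (rule reeb0) (use j lps in \<open>auto intro: set_update_memI\<close>)
      then show "snd (ps!j) * A ((map fst ps)[j := reeb]) = 0" by simp
    qed
    moreover have "map (\<lambda>(w,c). w + c *\<^sub>R reeb) ps = map (\<lambda>i. g i + c i *\<^sub>R reeb) is"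
      by (simp add: ps_def)
    moreover have "map fst ps = map g is" by (simp add: ps_def)
    ultimately show ?thesis using F_expand[OF mps dps] by simp
  qed
  obtain q0 u0 p0 where xe: "x = (q0, u0, p0)" by (cases x) auto
  have q0U: "q0 \<in> U" using x xe by (simp add: J1_def)
  obtain Fn where hF: "\<forall>\<phi>. Cinf_on U \<phi> \<longrightarrow> (\<forall>q\<in>U. \<forall>ws. length ws = CARD('n) \<longrightarrow> MA_op \<omega> \<phi> q ws = Fn (j1 \<phi> q) ws)"
    using FO unfolding first_order_def by blast
  have Gen: "A (map (\<lambda>i. (axis i 1, p0$i, (\<chi> a b. H' a b) *v axis i 1)) is) = Fn x (map (\<lambda>i. axis i 1) is)"
    if sym': "\<forall>i j. H' i j = H' j i" and li: "length is = CARD('n)" for H' :: "'n \<Rightarrow> 'n \<Rightarrow> real" and "is"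
  proof -
    define \<phi> where "\<phi> = Qf u0 (\<lambda>i. p0$i) (\<lambda>i j. H' i j / 2) q0"
    have c: "Cinf_on U \<phi>" unfolding \<phi>_def by (rule Qf_Cinf)
    have j0: "j1 \<phi> q0 = x" using j1_quad(1)[OF sym', of u0 p0 q0] xe by (simp add: \<phi>_def)
    have jd: "frechet_derivative (j1 \<phi>) (at q0) w = (w, \<Sum>i\<in>UNIV. p0$i * w$i, (\<chi> i j. H' i j) *v w)" for w
      using j1_quad(2)[OF sym', of u0 p0 q0 w] by (simp add: \<phi>_def)
    have "MA_op \<omega> \<phi> q0 (map (\<lambda>i. axis i 1) is) = Fn (j1 \<phi> q0) (map (\<lambda>i. axis i 1) is)"
      using hF c q0U li by simp
    moreover have "MA_op \<omega> \<phi> q0 (map (\<lambda>i. axis i 1) is) = A (map (\<lambda>i. (axis i 1, p0$i, (\<chi> a b. H' a b) *v axis i 1)) is)"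
      unfolding MA_op_def j0 A_def by (simp add: jd axis_dot comp_def)
    ultimately show ?thesis using j0 by simp
  qed
  have FOkey: "A (map (gv dq_vec dp_vec H UNIV) is) = A (map dq_vec is)"
    if sym: "\<forall>i j. H i j = H j i" and li: "length is = CARD('n)" for H "is"
  proof -
    have e1: "(axis i 1, p0$i, (\<chi> a b. H a b) *v axis i 1) = gv dq_vec dp_vec H UNIV i + p0$i *\<^sub>R reeb" for i
    proof -
      have "(\<chi> j. H j i) = (\<chi> j. H i j :: real^'n)" using sym by simp
      then show ?thesis by (simp add: mv_axis gv_explicit reeb_def)
    qed
    have e2: "(axis i 1, p0$i, (\<chi> a b. (\<lambda>_ _. 0::real) a b) *v axis i 1) = dq_vec i + p0$i *\<^sub>R reeb" for i
      by (simp add: mv_axis dq_vec_def reeb_def vec_eq_iff)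
    have "A (map (\<lambda>i. gv dq_vec dp_vec H UNIV i + p0$i *\<^sub>R reeb) is) = A (map (\<lambda>i. dq_vec i + p0$i *\<^sub>R reeb) is)"
      using Gen[OF sym li] Gen[of "\<lambda>_ _. 0" "is"] li by (simp add: e1[symmetric] e2[symmetric])
    then show ?thesis using strip[OF li, of "gv dq_vec dp_vec H UNIV" "\<lambda>i. p0$i"] strip[OF li, of dq_vec "\<lambda>i. p0$i"]
      by simp
  qed
  have mD: "mlin CARD('n) (dq_vol :: 'n jet list \<Rightarrow> real)" by (rule dq_mlin)
  have aD: "altz CARD('n) (dq_vol :: 'n jet list \<Rightarrow> real)" by (rule dq_altz)
  have bas: "A (map dq_vec is) = A E * dq_vol (map dq_vec is)" if li: "length is = CARD('n)" for "is" :: "'n list"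
  proof (cases "distinct is")
    case False
    then have nd: "\<not> distinct (map dq_vec is)" by (auto simp: distinct_map)
    have "A (map dq_vec is) = 0" by (rule altz_nd[OF aA _ nd]) (simp add: li)
    moreover have "dq_vol (map dq_vec is) = 0" by (rule altz_nd[OF aD _ nd]) (simp add: li)
    ultimately show ?thesis by simp
  next
    case True
    define T :: "'n list" where "T = map qenum [0..<CARD('n)]"
    have ET: "E = map dq_vec T" by (simp add: E_def T_def)
    have setis: "set is = UNIV"
      using True li by (metis card_eq_UNIV_imp_eq_UNIV distinct_card finite)
    have dT: "distinct T"
      unfolding T_def using bij_betw_imp_inj_on[OF qenum_bij]
      by (simp add: distinct_map atLeast0LessThan)
    have setT: "set T = UNIV"
      unfolding T_def using bij_betw_imp_surj_on[OF qenum_bij] by (simp add: atLeast0LessThan)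
    have "mset is = mset T" using mset_set_set[OF True] mset_set_set[OF dT] setis setT by simp
    then have "mset (map dq_vec is) = mset (map dq_vec T)" by simp
    then obtain s where s: "\<forall>B. mlin (length (map dq_vec T)) B \<longrightarrow> altz (length (map dq_vec T)) B
        \<longrightarrow> B (map dq_vec is) = s * B (map dq_vec T)"
      using perm_sign by blast
    have lT: "length (map dq_vec T) = CARD('n)" by (simp add: T_def)
    have "A (map dq_vec is) = s * A E" using s mA aA lT ET by simp
    moreover have "dq_vol (map dq_vec is) = s * dq_vol E" using s mD aD lT ET by simp
    moreover have "dq_vol E = 1" unfolding E_def by (rule dq_basis)
    ultimately show ?thesis by simp
  qed
  define A' where "A' vs = A vs - A E * dq_vol vs" for vs
  have mA': "mlin CARD('n) A'" unfolding A'_def[abs_def] by (rule mlin_comb[OF mA mD])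
  have aA': "altz CARD('n) A'"
    using aA aD unfolding altz_def A'_def by (metis mult_zero_right diff_zero)
  have PA': "Pc dq_vec dp_vec CARD('n) A' UNIV"
    unfolding Pc_def
  proof (intro allI impI)
    fix zs :: "'n jet list" assume lz: "length zs + 2 = CARD('n)"
    have "bot_op \<omega> x zs = 0" using Eff x lz unfolding effective_def by auto
    then have s1: "(\<Sum>\<mu>\<in>UNIV. A (dq_vec \<mu> # dp_vec \<mu> # zs)) = 0"
      by (simp add: bot_op_def interior_def A_def)
    have s2: "dq_vol (dq_vec \<mu> # dp_vec \<mu> # zs) = 0" for \<mu>
      by (rule dq_zero[of _ 1]) (use lz in \<open>auto simp: dp_vec_def\<close>)
    show "(\<Sum>\<mu>\<in>UNIV. A' (dq_vec \<mu> # dp_vec \<mu> # zs)) = 0"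
      using s1 s2 by (simp add: A'_def sum_subtractf)
  qed
  have GA': "Gc dq_vec dp_vec CARD('n) A' UNIV"
    unfolding Gc_def
  proof (intro allI impI)
    fix H :: "'n \<Rightarrow> 'n \<Rightarrow> real" and "is" :: "'n list"
    assume sym: "\<forall>i j. H i j = H j i" and li: "length is = CARD('n)" and "set is \<subseteq> UNIV"
    have "dq_vol (map (gv dq_vec dp_vec H UNIV) is) = dq_vol (map dq_vec is)"
      by (rule dq_fst) (use li in \<open>simp_all add: gv_explicit dq_vec_def\<close>)
    then show "A' (map (gv dq_vec dp_vec H UNIV) is) = 0"
      using FOkey[OF sym li] bas[OF li] by (simp add: A'_def)
  qed
  have words: "A' ws = 0" if "length ws = CARD('n)" "set ws \<subseteq> insert reeb (range dq_vec \<union> range dp_vec)" for ws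
  proof (cases "reeb \<in> set ws")
    case True
    then obtain j where j: "j < length ws" "ws ! j = reeb" by (metis in_set_conv_nth)
    have "A ws = 0" by (rule reeb0) (use that True in auto)
    moreover have "dq_vol ws = 0" by (rule dq_zero[of _ j]) (use that j in \<open>auto simp: reeb_def\<close>)
    ultimately show ?thesis by (simp add: A'_def)
  next
    case False
    then have "set ws \<subseteq> dq_vec ` UNIV \<union> dp_vec ` UNIV" using that by auto
    then show ?thesis
      using core[of UNIV dq_vec dp_vec] mA' aA' PA' GA' that by auto
  qed
  have "A' vs = 0"
  proof (rule span_vanish[of vs A' "insert reeb (range dq_vec \<union> range dp_vec)"])
    show "mlin (length vs) A'" using mA' lv by simp
    show "\<forall>ws. length ws = length vs \<longrightarrow> set ws \<subseteq> insert reeb (range dq_vec \<union> range dp_vec) \<longrightarrow> A' ws = 0"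
      using words lv by simp
    show "set vs \<subseteq> span (insert reeb (range dq_vec \<union> range dp_vec))" using span_all by blast
  qed
  then show ?thesis by (simp add: A'_def A_def E_def)
qed

theorem mainTheorem2:
  fixes U :: "(real^'n::finite) set"
    and \<omega> :: "'n jet \<Rightarrow> 'n jet list \<Rightarrow> real"
  assumes "open U"
    and "is_form (J1 U) CARD('n) \<omega>"
    and "effective (J1 U) CARD('n) \<omega>"
    and "first_order U \<omega>"
  shows "\<exists>L. Cinf_on (J1 U) L \<and>
           (\<forall>x\<in>J1 U. \<forall>vs. length vs = CARD('n) \<longrightarrow> \<omega> x vs = L x * dq_vol vs)"
proof (intro exI conjI)
  let ?E = "map (\<lambda>i. dq_vec (qenum i)) [0..<CARD('n)] :: 'n jet list"
  have "length ?E = CARD('n)" by simp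
  then show "Cinf_on (J1 U) (\<lambda>x. \<omega> x ?E)"
    using assms(2) unfolding is_form_def by blast
  show "\<forall>x\<in>J1 U. \<forall>vs. length vs = CARD('n) \<longrightarrow> \<omega> x vs = \<omega> x ?E * dq_vol vs"
    using pointwise[OF assms(2,3,4)] by blast
qed

end
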